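(* Let $d\ge1$, $L>0$, $c>0$, $\Delta t>0$, and let $p(\mathbf x,t)$ and $\mathbf v(\mathbf x,t)\in\mathbb{R}^d$ be smooth $L$-periodic (in each coordinate) functions whose Fourier coefficients satisfy, for all $\mathbf k\in(2\pi/L)\mathbb{Z}^d$ and all $t$ in the relevant range, $$\hat p(\mathbf k,t+\Delta t)=\hat p(\mathbf k,t)+\big(e^{ic|\mathbf k|\Delta t/2}-e^{-ic|\mathbf k|\Delta t/2}\big)\,\hat{\mathbf k}\cdot\hat{\mathbf v}(\mathbf k,t+\tfrac{\Delta t}{2}),$$ $$\hat{\mathbf v}(\mathbf k,t+\tfrac{\Delta t}{2})=\hat{\mathbf v}(\mathbf k,t-\tfrac{\Delta t}{2})+\big(e^{ic|\mathbf k|\Delta t/2}-e^{-ic|\mathbf k|\Delta t/2}\big)\,\hat{\mathbf k}\,\hat p(\mathbf k,t).$$ Define $\mathbf v_d=\mathcal G\mathcal G^{*}\mathbf v$, $\mathbf v_c=\mathbf v-\mathbf v_d$, $$P_\pm(\cdot,t)=p(\cdot,t)\mp S_\pm\mathcal G^{*}\mathbf v_d(\cdot,t-\tfrac{\Delta t}{2}),\qquad \mathbf V_\pm(\cdot,t+\tfrac{\Delta t}{2})=\mathbf v_d(\cdot,t+\tfrac{\Delta t}{2})\mp\mathcal G S_\pm p(\cdot,t).$$ Then for every multi-index $\alpha$, writing $\|f\|_\alpha=\|\partial^\alpha f\|_{L^2}$, $$\|P_\pm(\cdot,t+\Delta t)\|_\alpha=\|\mathbf V_\pm(\cdot,t+\tfrac{\Delta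 t}{2})\|_\alpha,\quad \|\mathbf V_\pm(\cdot,t+\tfrac{\Delta t}{2})\|_\alpha=\|P_\pm(\cdot,t)\|_\alpha,\quad \|\mathbf v_c(\cdot,t+\tfrac{\Delta t}{2})\|_\alpha=\|\mathbf v_c(\cdot,t-\tfrac{\Delta t}{2})\|_\alpha.$$
   Context: Here $\hat f(\mathbf k)$ denotes the Fourier coefficient of a periodic function on $[0,L)^d$, $|\mathbf k|=(k_1^2+\dots+k_d^2)^{1/2}$, and $\hat{\mathbf k}=\mathbf k/|\mathbf k|$ for $\mathbf k\ne0$, while $\hat{\mathbf 0}$ is set to an arbitrarily fixed unit vector. $S_\pm$ is the Fourier multiplier $\widehat{S_\pm f}(\mathbf k)=e^{\pm ic|\mathbf k|\Delta t/2}\hat f(\mathbf k)$ (acting componentwise on vector fields). $\mathcal G$ maps scalar functions to vector fields by $\widehat{\mathcal G f}(\mathbf k)=\hat{\mathbf k}\hat f(\mathbf k)$, and $\mathcal G^*$ is its $L^2$-adjoint, $\widehat{\mathcal G^*\mathbf w}(\mathbf k)=\hat{\mathbf k}\cdot\hat{\mathbf w}(\mathbf k)$. These Fourier formulas are the exact two-level (leapfrog) relations for the system $p_t=c\nabla\cdot\mathbf v$, $\mathbf v_t=c\nabla p$. *)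

theory Defs
  imports "HOL-Analysis.Analysis"
begin

text \<open>An L-periodic function on [0,L)^d is represented by its Fourier coefficients,
  indexed by m in Z^d, the wave vector being k = (2 pi / L) m.\<close>

definition kvec :: "real \<Rightarrow> int^'d \<Rightarrow> real^'d" where
  "kvec L m = (\<chi> j. 2 * pi / L * of_int (m $ j))"

text \<open>unit wave vector; at k = 0 it is the arbitrarily fixed unit vector u\<close>
definition khat :: "real \<Rightarrow> real^'d \<Rightarrow> int^'d \<Rightarrow> real^'d" where
  "khat L u m = (if kvec L m = 0 then u else (1 / norm (kvec L m)) *\<^sub>R kvec L m)"

definition Sop :: "real \<Rightarrow> real \<Rightarrow> real \<Rightarrow> real \<Rightarrow> (int^'d \<Rightarrow> complex) \<Rightarrow> int^'d \<Rightarrow> complex" where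
  "Sop \<sigma> L c dt f m = exp (complex_of_real \<sigma> * \<i> * c * norm (kvec L m) * dt / 2) * f m"

definition Gop :: "real \<Rightarrow> real^'d \<Rightarrow> (int^'d \<Rightarrow> complex) \<Rightarrow> int^'d \<Rightarrow> complex^'d" where
  "Gop L u f m = (\<chi> j. complex_of_real (khat L u m $ j) * f m)"

definition Gstar :: "real \<Rightarrow> real^'d \<Rightarrow> (int^'d \<Rightarrow> complex^'d) \<Rightarrow> int^'d \<Rightarrow> complex" where
  "Gstar L u w m = (\<Sum>j\<in>UNIV. complex_of_real (khat L u m $ j) * (w m $ j))"

text \<open>||d^alpha f||_{L^2([0,L)^d)} computed via Parseval from the Fourier coefficients
  (f(x) = sum_k fhat(k) e^{i k.x}, so ||f||^2 = L^d sum_k |fhat(k)|^2).\<close>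
definition sobnorm :: "real \<Rightarrow> nat^'d \<Rightarrow> (int^'d \<Rightarrow> complex) \<Rightarrow> real" where
  "sobnorm L \<alpha> f = sqrt (L ^ CARD('d) *
     (\<Sum>\<^sub>\<infinity>m. (\<Prod>j\<in>UNIV. (kvec L m $ j) ^ (2 * \<alpha> $ j)) * (cmod (f m))\<^sup>2))"

definition sobnormv :: "real \<Rightarrow> nat^'d \<Rightarrow> (int^'d \<Rightarrow> complex^'d) \<Rightarrow> real" where
  "sobnormv L \<alpha> w = sqrt (L ^ CARD('d) *
     (\<Sum>\<^sub>\<infinity>m. (\<Prod>j\<in>UNIV. (kvec L m $ j) ^ (2 * \<alpha> $ j)) * (norm (w m))\<^sup>2))"

text \<open>smoothness of a periodic function = rapid decay of its Fourier coefficients\<close>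
definition rapid_decay :: "real \<Rightarrow> (int^'d \<Rightarrow> 'a::real_normed_vector) \<Rightarrow> bool" where
  "rapid_decay L f \<longleftrightarrow> (\<forall>n::nat. \<exists>C. \<forall>m. (1 + norm (kvec L m)) ^ n * norm (f m) \<le> C)"

end

theory Submission
  imports Defs
begin

lemma khat_norm: assumes "norm u = 1" shows "norm (khat L u m) = 1"
  using assms by (simp add: khat_def)

lemma khat_sq: assumes "norm u = 1" shows "(\<Sum>j\<in>UNIV. (khat L u m $ j) * (khat L u m $ j)) = 1"
proof -
  have "(\<Sum>j\<in>UNIV. (khat L u m $ j) * (khat L u m $ j)) = khat L u m \<bullet> khat L u m"
    by (simp add: inner_vec_def)
  also have "\<dots> = (norm (khat L u m))\<^sup>2" by (simp add: power2_norm_eq_inner)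
  finally show ?thesis using khat_norm[OF assms] by simp
qed

lemma Gstar_Gop: assumes "norm u = 1" shows "Gstar L u (Gop L u f) m = f m"
proof -
  have "Gstar L u (Gop L u f) m = (\<Sum>j\<in>UNIV. complex_of_real ((khat L u m $ j) * (khat L u m $ j))) * f m"
    by (simp add: Gstar_def Gop_def sum_distrib_right mult.assoc)
  also have "\<dots> = f m" using khat_sq[OF assms, of L m] by (simp only: of_real_sum[symmetric]) simp
  finally show ?thesis .
qed

lemma norm_Gop: assumes "norm u = 1" shows "norm (Gop L u f m) = cmod (f m)"
proof -
  have "norm (Gop L u f m) = L2_set (\<lambda>j. cmod (f m) * \<bar>khat L u m $ j\<bar>) UNIV"
    by (simp add: norm_vec_def Gop_def norm_mult mult.commute)
  also have "\<dots> = cmod (f m) * L2_set (\<lambda>j. \<bar>khat L u m $ j\<bar>) UNIV"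
    by (simp add: L2_set_right_distrib)
  also have "L2_set (\<lambda>j. \<bar>khat L u m $ j\<bar>) UNIV = norm (khat L u m)"
    by (simp add: norm_vec_def)
  finally show ?thesis using khat_norm[OF assms] by simp
qed

lemma key1: fixes w p a :: complex assumes "cmod w = 1"
  shows "cmod (p + (w - inverse w) * a - w * a) = cmod (a - w * p)"
proof -
  have w0: "w \<noteq> 0" using assms by auto
  have "cmod (a - w * p) = cmod (- w * (p + (w - inverse w) * a - w * a))"
    using w0 by (simp add: algebra_simps)
  also have "\<dots> = cmod (p + (w - inverse w) * a - w * a)" by (simp add: norm_mult assms)
  finally show ?thesis by simp
qed

lemma key2: fixes w p a :: complex assumes "cmod w = 1"
  shows "cmod (p + (w - inverse w) * a + inverse w * a) = cmod (a + inverse w * p)"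
proof -
  have w0: "w \<noteq> 0" using assms by auto
  have "cmod (a + inverse w * p) = cmod (inverse w * (p + (w - inverse w) * a + inverse w * a))"
    using w0 by (simp add: algebra_simps)
  also have "\<dots> = cmod (p + (w - inverse w) * a + inverse w * a)" by (simp add: norm_mult assms norm_inverse)
  finally show ?thesis by simp
qed

theorem mainTheorem2:
  fixes L c dt :: real and u :: "real^'d"
    and p :: "real \<Rightarrow> int^'d \<Rightarrow> complex" and v :: "real \<Rightarrow> int^'d \<Rightarrow> complex^'d"
    and \<sigma> :: real and \<alpha> :: "nat^'d" and t :: real
  assumes L: "L > 0" and c: "c > 0" and dt: "dt > 0" and u: "norm u = 1"
    and p_real: "\<And>s m. p s (- m) = cnj (p s m)"
    and v_real: "\<And>s m j. v s (- m) $ j = cnj (v s m $ j)"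
    and p_smooth: "\<And>s. rapid_decay L (p s)"
    and v_smooth: "\<And>s. rapid_decay L (v s)"
    and eq_p: "\<And>s m. p (s + dt) m = p s m +
        (exp (\<i> * c * norm (kvec L m) * dt / 2) - exp (- \<i> * c * norm (kvec L m) * dt / 2))
        * Gstar L u (v (s + dt / 2)) m"
    and eq_v: "\<And>s m j. v (s + dt / 2) m $ j = v (s - dt / 2) m $ j +
        (exp (\<i> * c * norm (kvec L m) * dt / 2) - exp (- \<i> * c * norm (kvec L m) * dt / 2))
        * complex_of_real (khat L u m $ j) * p s m"
    and sigma: "\<sigma> = 1 \<or> \<sigma> = -1"
  defines "vd \<equiv> \<lambda>s. Gop L u (Gstar L u (v s))"
  defines "vc \<equiv> \<lambda>s m. v s m - vd s m"
  defines "P \<equiv> \<lambda>s m. p s m - complex_of_real \<sigma> * Sop \<sigma> L c dt (Gstar L u (vd (s - dt / 2))) m"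
  defines "V \<equiv> \<lambda>s m. vd (s + dt / 2) m - \<sigma> *\<^sub>R Gop L u (Sop \<sigma> L c dt (p s)) m"
  shows "sobnorm L \<alpha> (P (t + dt)) = sobnormv L \<alpha> (V t)
       \<and> sobnormv L \<alpha> (V t) = sobnorm L \<alpha> (P t)
       \<and> sobnormv L \<alpha> (vc (t + dt / 2)) = sobnormv L \<alpha> (vc (t - dt / 2))"
proof -
  define a where "a = (\<lambda>s. Gstar L u (v s))"
  define w where "w = (\<lambda>m::int^'d. exp (\<i> * c * norm (kvec L m) * dt / 2))"
  have w1: "cmod (w m) = 1" for m unfolding w_def by (simp add: norm_exp_eq_Re)
  have winv: "exp (- \<i> * c * norm (kvec L m) * dt / 2) = inverse (w m)" for m
  proof -
    have "- \<i> * c * norm (kvec L m) * dt / 2 = - (\<i> * c * norm (kvec L m) * dt / 2)" by simp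
    then show ?thesis unfolding w_def by (simp add: exp_minus)
  qed
  have S1: "Sop \<sigma> L c dt f m = (if \<sigma> = 1 then w m else inverse (w m)) * f m" for f m
  proof (cases "\<sigma> = 1")
    case True then show ?thesis by (simp add: Sop_def w_def)
  next
    case False then have "\<sigma> = -1" using sigma by simp
    then show ?thesis using winv[of m] by (simp add: Sop_def)
  qed
  have ep: "p (s + dt) m = p s m + (w m - inverse (w m)) * a (s + dt / 2) m" for s m
    using eq_p[of s m] winv[of m] unfolding a_def w_def by simp
  have ev: "v (s + dt / 2) m = v (s - dt / 2) m + (\<chi> j. (w m - inverse (w m)) * complex_of_real (khat L u m $ j) * p s m)" for s m
    using eq_v[of s m] winv[of m] unfolding w_def by (simp add: vec_eq_iff)
  have ea: "a (s + dt / 2) m = a (s - dt / 2) m + (w m - inverse (w m)) * p s m" for s m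
  proof -
    have "a (s + dt / 2) m = a (s - dt / 2) m + (w m - inverse (w m)) * (\<Sum>j\<in>UNIV. complex_of_real (khat L u m $ j * khat L u m $ j)) * p s m"
    proof -
      have "a (s + dt / 2) m = (\<Sum>j\<in>UNIV. complex_of_real (khat L u m $ j) * v (s - dt / 2) m $ j + (w m - inverse (w m)) * complex_of_real (khat L u m $ j * khat L u m $ j) * p s m)"
        unfolding a_def Gstar_def ev by (rule sum.cong) (simp_all add: algebra_simps)
      also have "\<dots> = a (s - dt / 2) m + (\<Sum>j\<in>UNIV. (w m - inverse (w m)) * complex_of_real (khat L u m $ j * khat L u m $ j) * p s m)"
        unfolding a_def Gstar_def by (simp add: sum.distrib)
      also have "(\<Sum>j\<in>UNIV. (w m - inverse (w m)) * complex_of_real (khat L u m $ j * khat L u m $ j) * p s m) = (w m - inverse (w m)) * (\<Sum>j\<in>UNIV. complex_of_real (khat L u m $ j * khat L u m $ j)) * p s m"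
        by (simp add: sum_distrib_left sum_distrib_right)
      finally show ?thesis .
    qed
    then show ?thesis using khat_sq[OF u, of L m] by (simp only: of_real_sum[symmetric]) simp
  qed
  have Gv: "Gstar L u (vd s) m = a s m" for s m
    unfolding vd_def a_def by (rule Gstar_Gop[OF u])
  have Pe: "P s m = p s m - \<sigma> * (if \<sigma> = 1 then w m else inverse (w m)) * a (s - dt / 2) m" for s m
    unfolding P_def S1 Gv by simp
  have Ve: "V s m = Gop L u (\<lambda>m. a (s + dt / 2) m - \<sigma> * (if \<sigma> = 1 then w m else inverse (w m)) * p s m) m" for s m
    unfolding V_def vd_def a_def Gop_def S1 by (simp add: vec_eq_iff algebra_simps scaleR_conv_of_real[where 'a=complex])
  have nV: "norm (V s m) = cmod (a (s + dt / 2) m - \<sigma> * (if \<sigma> = 1 then w m else inverse (w m)) * p s m)" for s m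
    unfolding Ve by (rule norm_Gop[OF u])
  have h1: "cmod (P (t + dt) m) = norm (V t m)" for m
  proof -
    have tt: "t + dt - dt / 2 = t + dt / 2" by simp
    show ?thesis
    proof (cases "\<sigma> = 1")
      case True
      then show ?thesis unfolding nV Pe tt ep using key1[OF w1[of m], of "p t m" "a (t + dt / 2) m"] by simp
    next
      case False then have s: "\<sigma> = -1" using sigma by simp
      show ?thesis unfolding nV Pe tt ep s using key2[OF w1[of m], of "p t m" "a (t + dt / 2) m"] by simp
    qed
  qed
  have h2: "norm (V t m) = cmod (P t m)" for m
  proof (cases "\<sigma> = 1")
    case True
    then show ?thesis unfolding nV Pe ea using key1[OF w1[of m], of "a (t - dt / 2) m" "p t m"]
      by (simp add: norm_minus_commute)
  next
    case False then have s: "\<sigma> = -1" using sigma by simp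
    show ?thesis unfolding nV Pe ea s using key2[OF w1[of m], of "a (t - dt / 2) m" "p t m"] by (simp add: add.commute)
  qed
  have h3: "vc (t + dt / 2) = vc (t - dt / 2)"
  proof (intro ext)
    fix m
    have "vd s m = (\<chi> j. complex_of_real (khat L u m $ j) * a s m)" for s
      unfolding vd_def Gop_def a_def by simp
    then show "vc (t + dt / 2) m = vc (t - dt / 2) m"
      unfolding vc_def ev by (simp add: vec_eq_iff algebra_simps ea)
  qed
  have "(\<lambda>m. cmod (P (t + dt) m)) = (\<lambda>m. norm (V t m))" using h1 by auto
  moreover have "(\<lambda>m. norm (V t m)) = (\<lambda>m. cmod (P t m))" using h2 by auto
  ultimately show ?thesis unfolding sobnorm_def sobnormv_def h3 by metis
qed

end
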